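(* The category of cubes $\widehat{\square}$ of all adjacency-preserving maps is the unique shell-complete category of cubes.
   Context: $[0]=\{()\}$, $[n]=\{0,1\}^n$ ($n\ge1$) with the product order; ${\rm PoSet}$ is the category of posets with strictly increasing maps. Face maps $\delta_i^\alpha:[n-1]\to[n]$ insert $\alpha\in\{0,1\}$ at position $i$; $\square$ is the subcategory of ${\rm PoSet}$ with objects $[n]$, $n\ge0$, generated by the face maps. With $d(\epsilon,\epsilon')=\sum_i|\epsilon_i-\epsilon'_i|$, a map $f:[m]\to[n]$ is adjacency-preserving if strictly increasing and $d(x,y)=1\Rightarrow d(f(x),f(y))=1$. A category of cubes is a subcategory $\mathcal A\subset{\rm PoSet}$ with objects $\{[n]:n\ge0\}$, containing $\square$, whose morphisms are all adjacency-preserving; $\widehat\square$ consists of all adjacency-preserving maps. An $\mathcal A$-set is a presheaf on $\mathcal A$; $\mathcal A[p]=\mathcal A(-,[p])$; $K_{\le1}$ denotes truncation to dimensions $\le 1$ (a presheaf on the full subcategory on $[0],[1]$). $\mathrm{cosk}_1^{\mathcal A}$ is the right adjoint of the truncation functor $K\mapsto K_{\le1}$ from $\mathcal A$-sets to $1$-dimensional $\mathcal A$-sets. $\mathcal A$ is shell-complete if for every $p\ge2$ the canonical map $\mathcal A[p]\to\mathrm{cosk}_1^{\mathcal A}(\mathcal A[p]_{\le1})$ (adjoint to the identity of $\mathcal A[p]_{\le1}$) is an isomorphism. *)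

theory Defs
  imports "HOL-Library.FuncSet"
begin

text \<open>Elements of [n] are boolean lists of length n (False = 0, True = 1);
  [0] = {[]} is the one-point poset.\<close>
definition cube :: "nat \<Rightarrow> bool list set" where
  "cube n = {x. length x = n}"

definition cle :: "bool list \<Rightarrow> bool list \<Rightarrow> bool" where
  "cle x y \<longleftrightarrow> list_all2 (\<le>) x y"

definition clt :: "bool list \<Rightarrow> bool list \<Rightarrow> bool" where
  "clt x y \<longleftrightarrow> cle x y \<and> x \<noteq> y"

definition hdist :: "bool list \<Rightarrow> bool list \<Rightarrow> nat" where
  "hdist x y = card {i. i < length x \<and> x ! i \<noteq> y ! i}"

text \<open>A morphism [m] -> [n] is a triple (m, n, f) with f an extensional map
  from cube m to cube n.\<close>
type_synonym cmor = "nat \<times> nat \<times> (bool list \<Rightarrow> bool list)"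

definition strictly_increasing :: "nat \<Rightarrow> nat \<Rightarrow> (bool list \<Rightarrow> bool list) \<Rightarrow> bool" where
  "strictly_increasing m n f \<longleftrightarrow>
     f \<in> cube m \<rightarrow>\<^sub>E cube n \<and>
     (\<forall>x\<in>cube m. \<forall>y\<in>cube m. clt x y \<longrightarrow> clt (f x) (f y))"

definition adjacency_preserving :: "nat \<Rightarrow> nat \<Rightarrow> (bool list \<Rightarrow> bool list) \<Rightarrow> bool" where
  "adjacency_preserving m n f \<longleftrightarrow>
     strictly_increasing m n f \<and>
     (\<forall>x\<in>cube m. \<forall>y\<in>cube m. hdist x y = 1 \<longrightarrow> hdist (f x) (f y) = 1)"

definition ccomp :: "nat \<Rightarrow> (bool list \<Rightarrow> bool list) \<Rightarrow> (bool list \<Rightarrow> bool list) \<Rightarrow> (bool list \<Rightarrow> bool list)" where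
  "ccomp m g f = restrict (g \<circ> f) (cube m)"

definition cid :: "nat \<Rightarrow> (bool list \<Rightarrow> bool list)" where
  "cid n = restrict id (cube n)"

text \<open>Face map delta_i^alpha : [n-1] -> [n] inserting alpha at position i
  (positions counted 0,...,n-1 here), for n >= 1.\<close>
definition face :: "nat \<Rightarrow> nat \<Rightarrow> bool \<Rightarrow> cmor" where
  "face n i a = (n - 1, n, restrict (\<lambda>x. take i x @ a # drop i x) (cube (n - 1)))"

text \<open>A subcategory of PoSet with objects [n], n >= 0 (identities, closure under
  composition), containing the cube category generated by the face maps, and
  all of whose morphisms are adjacency-preserving.\<close>
definition category_of_cubes :: "cmor set \<Rightarrow> bool" where
  "category_of_cubes A \<longleftrightarrow>
     (\<forall>(m, n, f)\<in>A. adjacency_preserving m n f) \<and>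
     (\<forall>n. (n, n, cid n) \<in> A) \<and>
     (\<forall>m n p f g. (m, n, f) \<in> A \<longrightarrow> (n, p, g) \<in> A \<longrightarrow> (m, p, ccomp m g f) \<in> A) \<and>
     (\<forall>n i a. 1 \<le> n \<longrightarrow> i < n \<longrightarrow> face n i a \<in> A)"

definition hatbox :: "cmor set" where
  "hatbox = {(m, n, f). adjacency_preserving m n f}"

text \<open>A[p]([k]) = A([k],[p]).\<close>
definition Hom :: "cmor set \<Rightarrow> nat \<Rightarrow> nat \<Rightarrow> (bool list \<Rightarrow> bool list) set" where
  "Hom A k p = {f. (k, p, f) \<in> A}"

text \<open>Index set of the truncation A[n]_{<=1}: pairs (k, g) with k in {0,1}, g in A([k],[n]).\<close>
definition trunc_dom :: "cmor set \<Rightarrow> nat \<Rightarrow> (nat \<times> (bool list \<Rightarrow> bool list)) set" where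
  "trunc_dom A n = {(k, g). k \<le> 1 \<and> g \<in> Hom A k n}"

text \<open>cosk_1^A(K)([n]) = Hom(A[n]_{<=1}, K) (maps of 1-dimensional A-sets), here for
  K = A[p]_{<=1}: natural families sigma_k : A([k],[n]) -> A([k],[p]), k in {0,1},
  naturality w.r.t. all morphisms of A between [0] and [1].\<close>
definition cosk1_rep :: "cmor set \<Rightarrow> nat \<Rightarrow> nat \<Rightarrow>
    ((nat \<times> (bool list \<Rightarrow> bool list)) \<Rightarrow> (bool list \<Rightarrow> bool list)) set" where
  "cosk1_rep A p n =
     {\<sigma>. \<sigma> \<in> extensional (trunc_dom A n) \<and>
          (\<forall>(k, g)\<in>trunc_dom A n. \<sigma> (k, g) \<in> Hom A k p) \<and>
          (\<forall>j k u g. j \<le> 1 \<longrightarrow> k \<le> 1 \<longrightarrow> (j, k, u) \<in> A \<longrightarrow> g \<in> Hom A k n \<longrightarrow>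
              \<sigma> (j, ccomp j g u) = ccomp j (\<sigma> (k, g)) u)}"

text \<open>Component at [n] of the canonical map A[p] -> cosk_1^A(A[p]_{<=1}),
  adjoint to the identity: f |-> (g |-> f o g).\<close>
definition cosk1_unit :: "cmor set \<Rightarrow> nat \<Rightarrow> nat \<Rightarrow> (bool list \<Rightarrow> bool list) \<Rightarrow>
    ((nat \<times> (bool list \<Rightarrow> bool list)) \<Rightarrow> (bool list \<Rightarrow> bool list))" where
  "cosk1_unit A p n f = (\<lambda>kg\<in>trunc_dom A n. ccomp (fst kg) f (snd kg))"

text \<open>Shell-complete: for every p >= 2 the canonical map is an isomorphism of
  A-sets, i.e. bijective at every level [n].\<close>
definition shell_complete :: "cmor set \<Rightarrow> bool" where
  "shell_complete A \<longleftrightarrow>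
     (\<forall>p\<ge>2. \<forall>n. bij_betw (cosk1_unit A p n) (Hom A n p) (cosk1_rep A p n))"

end

theory Submission
  imports Defs
begin

lemma hdist_Nil[simp]: "hdist [] y = 0"
  by (simp add: hdist_def)

lemma hdist_Cons[simp]: "hdist (a#x) (b#y) = (if a = b then 0 else 1) + hdist x y"
proof -
  let ?S = "Suc ` {i. i < length x \<and> x!i \<noteq> y!i}"
  let ?Z = "{i::nat. i = 0 \<and> a \<noteq> b}"
  have e: "{i. i < length (a#x) \<and> (a#x)!i \<noteq> (b#y)!i} = ?Z \<union> ?S"
  proof (rule set_eqI)
    fix i show "i \<in> {i. i < length (a#x) \<and> (a#x)!i \<noteq> (b#y)!i} \<longleftrightarrow> i \<in> ?Z \<union> ?S"
      by (cases i) auto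
  qed
  have d: "?Z \<inter> ?S = {}" by auto
  have fz: "finite ?Z" by (rule finite_subset[of _ "{0}"]) auto
  have "card (?Z \<union> ?S) = card ?Z + card ?S"
    using card_Un_disjoint[OF fz _ d] by simp
  moreover have "card ?Z = (if a = b then 0 else 1)" by auto
  moreover have "card ?S = hdist x y"
    by (simp add: card_image hdist_def)
  ultimately show ?thesis unfolding hdist_def e by simp
qed

lemma hdist_append: "length u = length u' \<Longrightarrow> hdist (u@v) (u'@v') = hdist u u' + hdist v v'"
  by (induction u u' rule: list_induct2) auto

lemma hdist_self[simp]: "hdist x x = 0"
  by (simp add: hdist_def)

lemma hdist_sym: "length x = length y \<Longrightarrow> hdist x y = hdist y x"
  by (induction x y rule: list_induct2) auto

lemma cle_Nil[simp]: "cle [] y \<longleftrightarrow> y = []" by (auto simp: cle_def)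
lemma cle_Cons[simp]: "cle (a#x) (b#y) \<longleftrightarrow> a \<le> b \<and> cle x y" by (auto simp: cle_def)
lemma cle_len: "cle x y \<Longrightarrow> length x = length y" by (auto simp: cle_def list_all2_lengthD)
lemma cle_refl[simp]: "cle x x" by (simp add: cle_def list_all2_refl)
lemma cle_append: "length u = length u' \<Longrightarrow> cle (u@v) (u'@v') \<longleftrightarrow> cle u u' \<and> cle v v'"
  by (simp add: cle_def list_all2_append)
lemma cle_trans: "cle x y \<Longrightarrow> cle y z \<Longrightarrow> cle x z"
  unfolding cle_def by (rule list_all2_trans) auto
lemma cle_antisym: "cle x y \<Longrightarrow> cle y x \<Longrightarrow> x = y"
  unfolding cle_def by (induction x y rule: list_all2_induct) auto
lemma clt_trans: "clt x y \<Longrightarrow> clt y z \<Longrightarrow> clt x z"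
  unfolding clt_def using cle_trans cle_antisym by blast

definition cover :: "bool list \<Rightarrow> bool list \<Rightarrow> bool" where
  "cover x y \<longleftrightarrow> (\<exists>pre suf. x = pre @ False # suf \<and> y = pre @ True # suf)"

lemma cover_props: "cover x y \<Longrightarrow> clt x y \<and> hdist x y = 1 \<and> length x = length y"
proof -
  assume "cover x y"
  then obtain pre suf where xy: "x = pre @ False # suf" "y = pre @ True # suf"
    unfolding cover_def by blast
  have "cle x y" unfolding xy by (simp add: cle_append)
  moreover have "x \<noteq> y" unfolding xy by simp
  moreover have "hdist x y = 1" unfolding xy by (simp add: hdist_append)
  ultimately show ?thesis unfolding clt_def xy by simp
qed

lemma hdist0: "length x = length y \<Longrightarrow> hdist x y = 0 \<Longrightarrow> x = y"
  by (induction x y rule: list_induct2) (auto split: if_splits)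

lemma hdist1_cases: "length x = length y \<Longrightarrow> hdist x y = 1 \<Longrightarrow>
   \<exists>pre a suf. x = pre @ a # suf \<and> y = pre @ (\<not>a) # suf"
proof (induction x y rule: list_induct2)
  case Nil then show ?case by simp
next
  case (Cons a x b y)
  show ?case
  proof (cases "a = b")
    case True
    with Cons obtain pre c suf where "x = pre @ c # suf" "y = pre @ (\<not>c) # suf" by auto
    with True have "a # x = (a#pre) @ c # suf \<and> b # y = (a#pre) @ (\<not>c) # suf" by simp
    then show ?thesis by blast
  next
    case False
    with Cons have "hdist x y = 0" by simp
    hence "x = y" using Cons(1) hdist0 by blast
    with False have "a # x = [] @ a # x \<and> b # y = [] @ (\<not>a) # x" by simp
    then show ?thesis by blast
  qed
qed

lemma hdist1_cover: "length x = length y \<Longrightarrow> hdist x y = 1 \<Longrightarrow> cover x y \<or> cover y x"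
proof -
  assume "length x = length y" "hdist x y = 1"
  then obtain pre a suf where xy: "x = pre @ a # suf" "y = pre @ (\<not>a) # suf"
    using hdist1_cases by blast
  show ?thesis
  proof (cases a)
    case True
    then show ?thesis unfolding cover_def xy by blast
  next
    case False
    then show ?thesis unfolding cover_def xy by blast
  qed
qed

lemma cover_iff: "cover x y \<longleftrightarrow> clt x y \<and> hdist x y = 1"
proof
  assume "cover x y" thus "clt x y \<and> hdist x y = 1" using cover_props by blast
next
  assume a: "clt x y \<and> hdist x y = 1"
  hence l: "length x = length y" by (auto simp: clt_def cle_len)
  have "\<not> cover y x"
  proof
    assume "cover y x"
    hence "clt y x" using cover_props by blast
    with a show False using cle_antisym clt_def by blast
  qed
  thus "cover x y" using hdist1_cover[OF l] a by blast
qed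

lemma clt_step: "length x = length y \<Longrightarrow> clt x y \<Longrightarrow>
   \<exists>z. cover x z \<and> cle z y \<and> hdist z y < hdist x y"
proof (induction x y rule: list_induct2)
  case Nil then show ?case by (simp add: clt_def)
next
  case (Cons a x b y)
  show ?case
  proof (cases "a = b")
    case True
    with Cons have "clt x y" by (auto simp: clt_def)
    with Cons obtain z where "cover x z \<and> cle z y \<and> hdist z y < hdist x y" by blast
    then obtain pre suf where z: "x = pre @ False # suf" "z = pre @ True # suf" "cle z y" "hdist z y < hdist x y"
      unfolding cover_def by blast
    have "cover (a#x) (a#z)" unfolding cover_def using z
      by (intro exI[of _ "a#pre"] exI[of _ suf]) simp
    with True z show ?thesis
      by (intro exI[of _ "a#z"]) auto
  next
    case False
    with Cons have ab: "a = False" "b = True" by (auto simp: clt_def)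
    show ?thesis using Cons ab
      by (intro exI[of _ "True#x"]) (auto simp: cover_def clt_def intro: exI[of _ "[]"])
  qed
qed

lemma clt_induct:
  assumes "clt x y"
    and cov: "\<And>x y. cover x y \<Longrightarrow> R x y"
    and tr: "\<And>x y z. R x y \<Longrightarrow> R y z \<Longrightarrow> R x z"
  shows "R x y"
proof -
  have "\<And>x. hdist x y = d \<Longrightarrow> clt x y \<Longrightarrow> R x y" for d
  proof (induction d rule: less_induct)
    case (less d x)
    have l: "length x = length y" using less.prems by (auto simp: clt_def cle_len)
    obtain z where z: "cover x z" "cle z y" "hdist z y < hdist x y"
      using clt_step[OF l less.prems(2)] by blast
    show ?case
    proof (cases "z = y")
      case True then show ?thesis using z cov by simp
    next
      case False
      hence "clt z y" using z by (simp add: clt_def)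
      hence "R z y" using less z by auto
      thus ?thesis using tr cov z by blast
    qed
  qed
  thus ?thesis using assms by blast
qed

lemma cube0: "cube 0 = {[]}" by (auto simp: cube_def)
lemma cube1: "cube 1 = {[False],[True]}"
  by (auto simp: cube_def length_Suc_conv)
lemma in_cube[simp]: "x \<in> cube n \<longleftrightarrow> length x = n" by (simp add: cube_def)

lemma mem_hatbox[simp]: "(m,n,f) \<in> hatbox \<longleftrightarrow> adjacency_preserving m n f"
  by (simp add: hatbox_def)

lemma ap_id: "adjacency_preserving n n (cid n)"
  by (auto simp: adjacency_preserving_def strictly_increasing_def cid_def)

lemma ap_comp: "adjacency_preserving m n f \<Longrightarrow> adjacency_preserving n p g \<Longrightarrow>
   adjacency_preserving m p (ccomp m g f)"
  unfolding adjacency_preserving_def strictly_increasing_def ccomp_def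
  by (auto simp: PiE_iff)

lemma ins_props:
  assumes "length x = length y" "i \<le> length x"
  shows "cle (take i x @ a # drop i x) (take i y @ a # drop i y) \<longleftrightarrow> cle x y"
    and "(take i x @ a # drop i x = take i y @ a # drop i y) \<longleftrightarrow> x = y"
    and "hdist (take i x @ a # drop i x) (take i y @ a # drop i y) = hdist x y"
proof -
  have lt: "length (take i x) = length (take i y)" using assms by simp
  have "cle x y \<longleftrightarrow> cle (take i x @ drop i x) (take i y @ drop i y)" by simp
  also have "\<dots> \<longleftrightarrow> cle (take i x) (take i y) \<and> cle (drop i x) (drop i y)"
    using lt by (rule cle_append)
  finally show "cle (take i x @ a # drop i x) (take i y @ a # drop i y) \<longleftrightarrow> cle x y"
    using lt by (simp add: cle_append)
  show "(take i x @ a # drop i x = take i y @ a # drop i y) \<longleftrightarrow> x = y"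
  proof
    assume "take i x @ a # drop i x = take i y @ a # drop i y"
    hence "take i x = take i y" "drop i x = drop i y" using lt by auto
    thus "x = y" by (metis append_take_drop_id)
  qed simp
  have "hdist x y = hdist (take i x @ drop i x) (take i y @ drop i y)" by simp
  also have "\<dots> = hdist (take i x) (take i y) + hdist (drop i x) (drop i y)"
    using lt by (rule hdist_append)
  finally show "hdist (take i x @ a # drop i x) (take i y @ a # drop i y) = hdist x y"
    using lt by (simp add: hdist_append)
qed

lemma face_fun: "face n i a = (n - 1, n, snd (snd (face n i a)))" by (simp add: face_def)

lemma ap_face: "1 \<le> n \<Longrightarrow> i < n \<Longrightarrow> adjacency_preserving (n-1) n (snd (snd (face n i a)))"
  unfolding adjacency_preserving_def strictly_increasing_def face_def clt_def
  using ins_props[of _ _ i a] by (auto simp: PiE_iff)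

lemma cat_hatbox: "category_of_cubes hatbox"
  unfolding category_of_cubes_def
proof (intro conjI allI impI)
  show "\<forall>(m, n, f)\<in>hatbox. adjacency_preserving m n f" by (auto simp: hatbox_def)
  show "(n, n, cid n) \<in> hatbox" for n by (simp add: ap_id)
  show "(m, p, ccomp m g f) \<in> hatbox" if "(m, n, f) \<in> hatbox" "(n, p, g) \<in> hatbox" for m n p f g
    using that ap_comp by simp
  show "face n i a \<in> hatbox" if "1 \<le> n" "i < n" for n i a
    using ap_face[OF that, of a] face_fun[of n i a] by (metis mem_hatbox)
qed

declare in_cube[simp del]
lemma cube1s[simp]: "cube (Suc 0) = {[False],[True]}" using cube1 by simp
lemma cube0s[simp]: "cube 0 = {[]}" using cube0 by simp
lemma in_cube_len[simp]: "x \<in> cube (length x)" by (simp add: in_cube)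

lemma len1: "length x = Suc 0 \<longleftrightarrow> (x = [False] \<or> x = [True])"
  by (cases x) auto

definition vtx :: "bool list \<Rightarrow> bool list \<Rightarrow> bool list" where
  "vtx w = restrict (\<lambda>_. w) (cube 0)"

definition edg :: "bool list \<Rightarrow> bool list \<Rightarrow> bool list \<Rightarrow> bool list" where
  "edg pre suf = restrict (\<lambda>b. pre @ hd b # suf) (cube 1)"

lemma clt_cube0: "length x = 0 \<Longrightarrow> length y = 0 \<Longrightarrow> \<not> clt x y"
  by (simp add: clt_def)

lemma clt_cube1: "length x = 1 \<Longrightarrow> length y = 1 \<Longrightarrow> clt x y \<longleftrightarrow> x = [False] \<and> y = [True]"
  by (auto simp: clt_def length_Suc_conv)

lemma vtx_hat: "(0, length w, vtx w) \<in> hatbox"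
  unfolding mem_hatbox adjacency_preserving_def strictly_increasing_def
  by (simp add: vtx_def clt_def PiE_iff)

lemma hom0: "(0, n, g) \<in> hatbox \<Longrightarrow> g = vtx (g []) \<and> length (g []) = n"
proof -
  assume "(0, n, g) \<in> hatbox"
  hence g: "g \<in> cube 0 \<rightarrow>\<^sub>E cube n" by (simp add: adjacency_preserving_def strictly_increasing_def)
  hence ge: "g \<in> extensional (cube 0)" by (simp add: PiE_iff)
  have "g = vtx (g [])"
  proof (rule extensionalityI[OF ge])
    show "vtx (g []) \<in> extensional (cube 0)" unfolding vtx_def by (rule restrict_extensional)
    fix x assume "x \<in> cube 0" thus "g x = vtx (g []) x" by (simp add: vtx_def)
  qed
  moreover have "g [] \<in> cube n" using g by (simp add: PiE_iff)
  ultimately show ?thesis by (simp add: in_cube)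
qed

lemma edg_hat: "(1, length pre + Suc (length suf), edg pre suf) \<in> hatbox"
proof -
  have c: "cover (pre @ False # suf) (pre @ True # suf)" by (auto simp: cover_def)
  have cl: "clt (pre @ False # suf) (pre @ True # suf)" and hd: "hdist (pre @ False # suf) (pre @ True # suf) = 1"
    using cover_props[OF c] by auto
  have hd': "hdist (pre @ True # suf) (pre @ False # suf) = 1"
    using hd hdist_sym[of "pre @ True # suf" "pre @ False # suf"] by simp
  have "edg pre suf \<in> cube 1 \<rightarrow>\<^sub>E cube (length pre + Suc (length suf))"
    by (auto simp: edg_def PiE_iff in_cube)
  moreover have "\<forall>x\<in>cube 1. \<forall>y\<in>cube 1. clt x y \<longrightarrow> clt (edg pre suf x) (edg pre suf y)"
    using cl by (auto simp: edg_def clt_def)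
  moreover have "\<forall>x\<in>cube 1. \<forall>y\<in>cube 1. hdist x y = 1 \<longrightarrow> hdist (edg pre suf x) (edg pre suf y) = 1"
    using hd hd' by (auto simp: edg_def)
  ultimately show ?thesis unfolding mem_hatbox adjacency_preserving_def strictly_increasing_def by blast
qed

lemma hom1: "(1, n, g) \<in> hatbox \<Longrightarrow> \<exists>pre suf. g = edg pre suf \<and> length pre + Suc (length suf) = n"
proof -
  assume "(1, n, g) \<in> hatbox"
  hence ap: "adjacency_preserving 1 n g" by simp
  hence g: "g \<in> cube 1 \<rightarrow>\<^sub>E cube n" and
    inc: "\<forall>x\<in>cube 1. \<forall>y\<in>cube 1. clt x y \<longrightarrow> clt (g x) (g y)" and
    adj: "\<forall>x\<in>cube 1. \<forall>y\<in>cube 1. hdist x y = 1 \<longrightarrow> hdist (g x) (g y) = 1"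
    by (simp_all add: adjacency_preserving_def strictly_increasing_def)
  have ge: "g \<in> extensional (cube 1)" using g by (simp add: PiE_iff)
  have gv: "g [False] \<in> cube n" "g [True] \<in> cube n" using g by (simp_all add: PiE_iff)
  have "clt [False] [True]" by (simp add: clt_def)
  hence "clt (g [False]) (g [True])" using inc by simp
  moreover have "hdist (g [False]) (g [True]) = 1" using adj by simp
  ultimately have "cover (g [False]) (g [True])" by (simp add: cover_iff)
  then obtain pre suf where ps: "g [False] = pre @ False # suf" "g [True] = pre @ True # suf"
    unfolding cover_def by blast
  have "g = edg pre suf"
  proof (rule extensionalityI[OF ge])
    show "edg pre suf \<in> extensional (cube 1)" unfolding edg_def by (rule restrict_extensional)
    fix x assume "x \<in> cube 1" thus "g x = edg pre suf x" using ps by (auto simp: edg_def)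
  qed
  moreover have "length pre + Suc (length suf) = n" using gv ps by (simp add: in_cube)
  ultimately show ?thesis by blast
qed

lemma cat_sub: "category_of_cubes A \<Longrightarrow> (m, n, f) \<in> A \<Longrightarrow> (m, n, f) \<in> hatbox"
  unfolding category_of_cubes_def by auto

lemma cat_comp: "category_of_cubes A \<Longrightarrow> (m, n, f) \<in> A \<Longrightarrow> (n, p, g) \<in> A \<Longrightarrow> (m, p, ccomp m g f) \<in> A"
  unfolding category_of_cubes_def by blast

lemma cat_face: "category_of_cubes A \<Longrightarrow> 1 \<le> n \<Longrightarrow> i < n \<Longrightarrow>
    (n - 1, n, restrict (\<lambda>x. take i x @ a # drop i x) (cube (n - 1))) \<in> A"
  unfolding category_of_cubes_def face_def by blast

lemma cat_id: "category_of_cubes A \<Longrightarrow> (n, n, cid n) \<in> A"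
  unfolding category_of_cubes_def by blast

lemma vtx_A: "category_of_cubes A \<Longrightarrow> (0, length w, vtx w) \<in> A"
proof (induction w)
  case Nil
  have "vtx [] = cid 0" by (auto simp: vtx_def cid_def cube0)
  then show ?case using cat_id[OF Nil] by simp
next
  case (Cons a w)
  have f: "(length w, Suc (length w), restrict (\<lambda>x. take 0 x @ a # drop 0 x) (cube (length w))) \<in> A"
    using cat_face[OF Cons(2), of "Suc (length w)" 0 a] by simp
  have "ccomp 0 (restrict (\<lambda>x. take 0 x @ a # drop 0 x) (cube (length w))) (vtx w) = vtx (a # w)"
    unfolding ccomp_def vtx_def by (rule restrict_ext) simp
  then show ?case using cat_comp[OF Cons(2) Cons.IH[OF Cons(2)] f] by simp
qed

lemma edg_A_Nil: "category_of_cubes A \<Longrightarrow> (1, Suc (length suf), edg [] suf) \<in> A"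
proof (induction suf)
  case Nil
  have "edg [] [] = cid 1" unfolding edg_def cid_def
    by (rule restrict_ext) (auto simp: in_cube)
  then show ?case using cat_id[OF Nil] by simp
next
  case (Cons c suf)
  have f: "(Suc (length suf), Suc (Suc (length suf)), restrict (\<lambda>x. take 1 x @ c # drop 1 x) (cube (Suc (length suf)))) \<in> A"
    using cat_face[OF Cons(2), of "Suc (Suc (length suf))" 1 c] by simp
  have "ccomp 1 (restrict (\<lambda>x. take 1 x @ c # drop 1 x) (cube (Suc (length suf)))) (edg [] suf) = edg [] (c # suf)"
    unfolding ccomp_def edg_def by (rule restrict_ext) (auto simp: in_cube)
  then show ?case using cat_comp[OF Cons(2) Cons.IH[OF Cons(2)] f] by simp
qed

lemma edg_A: "category_of_cubes A \<Longrightarrow> (1, length pre + Suc (length suf), edg pre suf) \<in> A"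
proof (induction pre)
  case Nil then show ?case using edg_A_Nil by simp
next
  case (Cons a pre)
  let ?N = "length pre + Suc (length suf)"
  have f: "(?N, Suc ?N, restrict (\<lambda>x. take 0 x @ a # drop 0 x) (cube ?N)) \<in> A"
    using cat_face[OF Cons(2), of "Suc ?N" 0 a] by simp
  have "ccomp 1 (restrict (\<lambda>x. take 0 x @ a # drop 0 x) (cube ?N)) (edg pre suf) = edg (a # pre) suf"
    unfolding ccomp_def edg_def by (rule restrict_ext) (auto simp: in_cube)
  then show ?case using cat_comp[OF Cons(2) Cons.IH[OF Cons(2)] f] by simp
qed

lemma low_A: "category_of_cubes A \<Longrightarrow> k \<le> 1 \<Longrightarrow> (k, n, g) \<in> A \<longleftrightarrow> (k, n, g) \<in> hatbox"
proof -
  assume A: "category_of_cubes A" and k: "k \<le> 1"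
  show ?thesis
  proof
    assume "(k, n, g) \<in> A" thus "(k, n, g) \<in> hatbox" using cat_sub[OF A] by blast
  next
    assume h: "(k, n, g) \<in> hatbox"
    show "(k, n, g) \<in> A"
    proof (cases "k = 0")
      case True
      then show ?thesis using hom0[of n g] h vtx_A[OF A, of "g []"] by auto
    next
      case False
      hence "k = 1" using k by simp
      then obtain pre suf where "g = edg pre suf" "length pre + Suc (length suf) = n"
        using hom1 h by blast
      then show ?thesis using edg_A[OF A, of pre suf] \<open>k = 1\<close> by simp
    qed
  qed
qed

lemma ccomp_assoc: "u \<in> cube j \<rightarrow>\<^sub>E cube k \<Longrightarrow> ccomp j f (ccomp j g u) = ccomp j (ccomp k f g) u"
  unfolding ccomp_def by (rule restrict_ext) (simp add: PiE_iff)

lemma ap_PiE: "(m, n, f) \<in> hatbox \<Longrightarrow> f \<in> cube m \<rightarrow>\<^sub>E cube n"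
  by (simp add: adjacency_preserving_def strictly_increasing_def)

lemma hat_comp: "(m, n, f) \<in> hatbox \<Longrightarrow> (n, p, g) \<in> hatbox \<Longrightarrow> (m, p, ccomp m g f) \<in> hatbox"
  using ap_comp by simp

lemma unit_in: "(n, p, f) \<in> hatbox \<Longrightarrow> cosk1_unit hatbox p n f \<in> cosk1_rep hatbox p n"
  unfolding cosk1_rep_def mem_Collect_eq
proof (intro conjI allI impI)
  assume f: "(n, p, f) \<in> hatbox"
  show "cosk1_unit hatbox p n f \<in> extensional (trunc_dom hatbox n)"
    unfolding cosk1_unit_def by (rule restrict_extensional)
  show "\<forall>(k, g)\<in>trunc_dom hatbox n. cosk1_unit hatbox p n f (k, g) \<in> Hom hatbox k p"
    using f hat_comp by (auto simp: cosk1_unit_def trunc_dom_def Hom_def simp del: mem_hatbox)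
  fix j k u g
  assume j: "j \<le> 1" and k: "k \<le> 1" and u: "(j, k, u) \<in> hatbox" and g: "g \<in> Hom hatbox k n"
  have g': "(k, n, g) \<in> hatbox" using g by (simp add: Hom_def del: mem_hatbox)
  have "(j, n, ccomp j g u) \<in> hatbox" using hat_comp[OF u g'] .
  hence "(j, ccomp j g u) \<in> trunc_dom hatbox n" using j by (simp add: trunc_dom_def Hom_def del: mem_hatbox)
  moreover have "(k, g) \<in> trunc_dom hatbox n" using k g by (simp add: trunc_dom_def)
  ultimately show "cosk1_unit hatbox p n f (j, ccomp j g u) = ccomp j (cosk1_unit hatbox p n f (k, g)) u"
    using ccomp_assoc[OF ap_PiE[OF u]] by (simp add: cosk1_unit_def)
qed

lemma unit_vtx: "(n, p, f) \<in> hatbox \<Longrightarrow> x \<in> cube n \<Longrightarrow> cosk1_unit hatbox p n f (0, vtx x) [] = f x"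
proof -
  assume "x \<in> cube n"
  hence "(0, n, vtx x) \<in> hatbox" using vtx_hat[of x] by (simp add: in_cube)
  hence "(0, vtx x) \<in> trunc_dom hatbox n" by (simp add: trunc_dom_def Hom_def del: mem_hatbox)
  thus ?thesis by (simp add: cosk1_unit_def ccomp_def vtx_def)
qed

lemma unit_inj: "(n, p, f) \<in> hatbox \<Longrightarrow> (n, p, f') \<in> hatbox \<Longrightarrow>
    cosk1_unit hatbox p n f = cosk1_unit hatbox p n f' \<Longrightarrow> f = f'"
proof -
  assume f: "(n, p, f) \<in> hatbox" and f': "(n, p, f') \<in> hatbox" and e: "cosk1_unit hatbox p n f = cosk1_unit hatbox p n f'"
  show "f = f'"
  proof (rule extensionalityI[of _ "cube n"])
    show "f \<in> extensional (cube n)" using ap_PiE[OF f] by (simp add: PiE_iff)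
    show "f' \<in> extensional (cube n)" using ap_PiE[OF f'] by (simp add: PiE_iff)
    fix x assume "x \<in> cube n"
    thus "f x = f' x" using unit_vtx[OF f] unit_vtx[OF f'] e by metis
  qed
qed

lemma unit_surj:
  assumes s: "\<sigma> \<in> cosk1_rep hatbox p n"
  shows "\<exists>f. (n, p, f) \<in> hatbox \<and> cosk1_unit hatbox p n f = \<sigma>"
proof -
  have S1: "\<sigma> \<in> extensional (trunc_dom hatbox n)"
    and S2: "\<And>k g. (k, g) \<in> trunc_dom hatbox n \<Longrightarrow> \<sigma> (k, g) \<in> Hom hatbox k p"
    and S3: "\<And>j k u g. j \<le> 1 \<Longrightarrow> k \<le> 1 \<Longrightarrow> (j, k, u) \<in> hatbox \<Longrightarrow> g \<in> Hom hatbox k n \<Longrightarrow>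
              \<sigma> (j, ccomp j g u) = ccomp j (\<sigma> (k, g)) u"
    using s unfolding cosk1_rep_def by auto
  have td: "(k, g) \<in> trunc_dom hatbox n \<longleftrightarrow> k \<le> 1 \<and> (k, n, g) \<in> hatbox" for k g
    by (simp add: trunc_dom_def Hom_def del: mem_hatbox)
  have S2': "k \<le> 1 \<Longrightarrow> (k, n, g) \<in> hatbox \<Longrightarrow> (k, p, \<sigma> (k, g)) \<in> hatbox" for k g
    using S2[of k g] td[of k g] by (simp add: Hom_def del: mem_hatbox)
  define \<phi> where "\<phi> = restrict (\<lambda>x. \<sigma> (0, vtx x) []) (cube n)"
  have vtxn: "x \<in> cube n \<Longrightarrow> (0, n, vtx x) \<in> hatbox" for x using vtx_hat[of x] by (simp add: in_cube)
  have phi_cube: "x \<in> cube n \<Longrightarrow> \<phi> x \<in> cube p" for x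
  proof -
    assume x: "x \<in> cube n"
    have "(0, p, \<sigma> (0, vtx x)) \<in> hatbox" using S2'[of 0 "vtx x"] vtxn[OF x] by simp
    thus ?thesis using hom0 x by (simp add: \<phi>_def in_cube)
  qed
  have nat0: "(0, n, g) \<in> hatbox \<Longrightarrow> \<sigma> (0, g) [] = \<phi> (g [])" for g
    using hom0[of n g] by (auto simp: \<phi>_def)
  have nat1: "\<sigma> (1, g) b = \<phi> (g b)" if g: "(1, n, g) \<in> hatbox" and b: "b \<in> cube 1" for g b
  proof -
    have lb: "length b = 1" using b by (simp only: in_cube)
    have u: "(0, 1, vtx b) \<in> hatbox" using vtx_hat[of b] unfolding lb .
    have gb: "g b \<in> cube n" using ap_PiE[OF g] b by (rule PiE_mem)
    have "ccomp 0 g (vtx b) = vtx (g b)" unfolding ccomp_def vtx_def by (rule restrict_ext) simp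
    hence "\<sigma> (0, vtx (g b)) = ccomp 0 (\<sigma> (1, g)) (vtx b)"
      using S3[of 0 1 "vtx b" g] u g by (simp add: Hom_def del: mem_hatbox)
    hence "\<sigma> (0, vtx (g b)) [] = \<sigma> (1, g) b" by (simp add: ccomp_def vtx_def)
    thus ?thesis using gb by (simp add: \<phi>_def)
  qed
  have natk: "\<sigma> (k, g) x = \<phi> (g x)" if "k \<le> 1" "(k, n, g) \<in> hatbox" "x \<in> cube k" for k g x
  proof (cases "k = 0")
    case True thus ?thesis using that nat0[of g] by simp
  next
    case False hence "k = 1" using that by simp
    thus ?thesis using that nat1 by simp
  qed
  have cov: "x \<in> cube n \<Longrightarrow> cover x y \<Longrightarrow> cover (\<phi> x) (\<phi> y) \<and> y \<in> cube n" for x y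
  proof -
    assume x: "x \<in> cube n" and c: "cover x y"
    then obtain pre suf where ps: "x = pre @ False # suf" "y = pre @ True # suf" unfolding cover_def by blast
    have ln: "length pre + Suc (length suf) = n" using x ps by (simp add: in_cube)
    have g: "(1, n, edg pre suf) \<in> hatbox" using edg_hat[of pre suf] ln by simp
    have ap: "(1, p, \<sigma> (1, edg pre suf)) \<in> hatbox" using S2'[OF _ g] by simp
    have "clt [False] [True]" by (simp add: clt_def)
    hence "clt (\<sigma> (1, edg pre suf) [False]) (\<sigma> (1, edg pre suf) [True])" using ap
      by (simp add: adjacency_preserving_def strictly_increasing_def)
    moreover have "hdist (\<sigma> (1, edg pre suf) [False]) (\<sigma> (1, edg pre suf) [True]) = 1" using ap
      by (simp add: adjacency_preserving_def)
    moreover have "\<sigma> (1, edg pre suf) [False] = \<phi> x" "\<sigma> (1, edg pre suf) [True] = \<phi> y"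
      using nat1[OF g] ps by (simp_all add: edg_def)
    ultimately have "cover (\<phi> x) (\<phi> y)" by (simp add: cover_iff)
    moreover have "y \<in> cube n" using ln ps by (simp add: in_cube)
    ultimately show ?thesis by simp
  qed
  have incr: "clt (\<phi> x) (\<phi> y)" if "x \<in> cube n" "clt x y" for x y
  proof -
    have "x \<in> cube n \<longrightarrow> y \<in> cube n \<and> clt (\<phi> x) (\<phi> y)"
      using that(2)
    proof (rule clt_induct)
      fix x y assume "cover x y" thus "x \<in> cube n \<longrightarrow> y \<in> cube n \<and> clt (\<phi> x) (\<phi> y)"
        using cov cover_props by blast
    next
      fix x y z assume "x \<in> cube n \<longrightarrow> y \<in> cube n \<and> clt (\<phi> x) (\<phi> y)"
        "y \<in> cube n \<longrightarrow> z \<in> cube n \<and> clt (\<phi> y) (\<phi> z)"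
      thus "x \<in> cube n \<longrightarrow> z \<in> cube n \<and> clt (\<phi> x) (\<phi> z)" using clt_trans by blast
    qed
    thus ?thesis using that by blast
  qed
  have adj: "hdist (\<phi> x) (\<phi> y) = 1" if "x \<in> cube n" "y \<in> cube n" "hdist x y = 1" for x y
  proof -
    have "cover x y \<or> cover y x" using hdist1_cover that by (simp add: in_cube)
    moreover have "length (\<phi> x) = length (\<phi> y)" using phi_cube that by (simp add: in_cube)
    ultimately show ?thesis using cov that cover_props hdist_sym by metis
  qed
  have phi_hat: "(n, p, \<phi>) \<in> hatbox"
    unfolding mem_hatbox adjacency_preserving_def strictly_increasing_def
  proof (intro conjI ballI impI)
    have "\<phi> \<in> extensional (cube n)" unfolding \<phi>_def by (rule restrict_extensional)
    thus "\<phi> \<in> cube n \<rightarrow>\<^sub>E cube p" using phi_cube by (simp add: PiE_iff)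
  qed (use incr adj in auto)
  have "cosk1_unit hatbox p n \<phi> = \<sigma>"
  proof (rule extensionalityI[of _ "trunc_dom hatbox n"])
    show "cosk1_unit hatbox p n \<phi> \<in> extensional (trunc_dom hatbox n)"
      unfolding cosk1_unit_def by (rule restrict_extensional)
    show "\<sigma> \<in> extensional (trunc_dom hatbox n)" by (rule S1)
    fix kg assume kg: "kg \<in> trunc_dom hatbox n"
    obtain k g where kgd: "kg = (k, g)" by (cases kg)
    have k: "k \<le> 1" and g: "(k, n, g) \<in> hatbox" using kg kgd td by auto
    have "ccomp k \<phi> g = \<sigma> (k, g)"
    proof (rule extensionalityI[of _ "cube k"])
      show "ccomp k \<phi> g \<in> extensional (cube k)" unfolding ccomp_def by (rule restrict_extensional)
      show "\<sigma> (k, g) \<in> extensional (cube k)" using ap_PiE[OF S2'[OF k g]] by (simp add: PiE_iff)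
      fix x assume "x \<in> cube k" thus "ccomp k \<phi> g x = \<sigma> (k, g) x"
        using natk[OF k g] by (simp add: ccomp_def)
    qed
    thus "cosk1_unit hatbox p n \<phi> kg = \<sigma> kg" using kg kgd by (simp add: cosk1_unit_def)
  qed
  thus ?thesis using phi_hat by blast
qed

lemma shell_hat: "shell_complete hatbox"
  unfolding shell_complete_def
proof (intro allI impI)
  fix p n :: nat
  show "bij_betw (cosk1_unit hatbox p n) (Hom hatbox n p) (cosk1_rep hatbox p n)"
    unfolding bij_betw_def
  proof
    show "inj_on (cosk1_unit hatbox p n) (Hom hatbox n p)"
      by (rule inj_onI) (use unit_inj in \<open>simp add: Hom_def del: mem_hatbox\<close>)
    show "cosk1_unit hatbox p n ` Hom hatbox n p = cosk1_rep hatbox p n"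
    proof
      show "cosk1_unit hatbox p n ` Hom hatbox n p \<subseteq> cosk1_rep hatbox p n"
        using unit_in by (auto simp: Hom_def simp del: mem_hatbox)
      show "cosk1_rep hatbox p n \<subseteq> cosk1_unit hatbox p n ` Hom hatbox n p"
      proof
        fix \<sigma> assume "\<sigma> \<in> cosk1_rep hatbox p n"
        then obtain f where "(n, p, f) \<in> hatbox" "cosk1_unit hatbox p n f = \<sigma>" using unit_surj by blast
        thus "\<sigma> \<in> cosk1_unit hatbox p n ` Hom hatbox n p" by (auto simp: Hom_def simp del: mem_hatbox)
      qed
    qed
  qed
qed

lemma HomEq: "category_of_cubes A \<Longrightarrow> k \<le> 1 \<Longrightarrow> Hom A k m = Hom hatbox k m"
proof -
  assume A: "category_of_cubes A" and k: "k \<le> 1"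
  show ?thesis unfolding Hom_def
  proof (rule Collect_cong)
    fix f show "((k, m, f) \<in> A) = ((k, m, f) \<in> hatbox)" by (rule low_A[OF A k])
  qed
qed

lemma tdEq: "category_of_cubes A \<Longrightarrow> trunc_dom A n = trunc_dom hatbox n"
proof -
  assume A: "category_of_cubes A"
  have "\<And>k g. (k \<le> 1 \<and> g \<in> Hom A k n) = (k \<le> 1 \<and> g \<in> Hom hatbox k n)"
    using HomEq[OF A] by blast
  thus ?thesis unfolding trunc_dom_def by (simp only:)
qed

lemma uEq: "category_of_cubes A \<Longrightarrow> cosk1_unit A p n = cosk1_unit hatbox p n"
  unfolding cosk1_unit_def by (simp only: tdEq)

lemma p_ge2: "(n, p, f) \<in> hatbox \<Longrightarrow> 2 \<le> n \<Longrightarrow> 2 \<le> p"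
proof (rule ccontr)
  assume f: "(n, p, f) \<in> hatbox" and n: "2 \<le> n" and np: "\<not> 2 \<le> p"
  obtain m where m: "n = Suc (Suc m)" using n by (metis add_2_eq_Suc le_Suc_ex)
  let ?x = "False # False # replicate m False"
  let ?y = "True # False # replicate m False"
  let ?z = "True # True # replicate m False"
  have c: "?x \<in> cube n" "?y \<in> cube n" "?z \<in> cube n" using m by (simp_all add: in_cube)
  have "clt ?x ?y" "clt ?y ?z" by (simp_all add: clt_def)
  hence l: "clt (f ?x) (f ?y)" "clt (f ?y) (f ?z)" using f c
    by (simp_all add: adjacency_preserving_def strictly_increasing_def)
  have lens: "length (f ?x) = p" "length (f ?y) = p" "length (f ?z) = p"
    using ap_PiE[OF f] c by (simp_all add: PiE_iff in_cube)
  show False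
  proof (cases "p = 0")
    case True thus False using l(1) clt_cube0[of "f ?x" "f ?y"] lens by simp
  next
    case False hence "p = 1" using np by simp
    thus False using l clt_cube1[of "f ?x" "f ?y"] clt_cube1[of "f ?y" "f ?z"] lens by simp
  qed
qed

lemma repSub: "category_of_cubes A \<Longrightarrow> cosk1_rep hatbox p n \<subseteq> cosk1_rep A p n"
proof
  fix \<sigma> assume A: "category_of_cubes A" and s: "\<sigma> \<in> cosk1_rep hatbox p n"
  have S1: "\<sigma> \<in> extensional (trunc_dom hatbox n)"
    and S2: "\<And>k g. (k, g) \<in> trunc_dom hatbox n \<Longrightarrow> \<sigma> (k, g) \<in> Hom hatbox k p"
    and S3: "\<And>j k u g. j \<le> 1 \<Longrightarrow> k \<le> 1 \<Longrightarrow> (j, k, u) \<in> hatbox \<Longrightarrow> g \<in> Hom hatbox k n \<Longrightarrow>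
              \<sigma> (j, ccomp j g u) = ccomp j (\<sigma> (k, g)) u"
    using s unfolding cosk1_rep_def by auto
  note td = tdEq[OF A, of n]
  show "\<sigma> \<in> cosk1_rep A p n"
    unfolding cosk1_rep_def mem_Collect_eq
  proof (intro conjI allI impI)
    show "\<sigma> \<in> extensional (trunc_dom A n)" using S1 td by simp
    show "\<forall>(k, g)\<in>trunc_dom A n. \<sigma> (k, g) \<in> Hom A k p"
    proof (intro ballI, clarify)
      fix k g assume kg: "(k, g) \<in> trunc_dom A n"
      hence k: "k \<le> 1" by (simp add: trunc_dom_def)
      have "\<sigma> (k, g) \<in> Hom hatbox k p" using S2 kg td by simp
      thus "\<sigma> (k, g) \<in> Hom A k p" using HomEq[OF A k] by simp
    qed
    fix j k u g assume a: "j \<le> 1" "k \<le> 1" "(j, k, u) \<in> A" "g \<in> Hom A k n"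
    have "(j, k, u) \<in> hatbox" using cat_sub[OF A a(3)] .
    moreover have "g \<in> Hom hatbox k n" using a(4) HomEq[OF A a(2)] by simp
    ultimately show "\<sigma> (j, ccomp j g u) = ccomp j (\<sigma> (k, g)) u"
      using S3 a(1,2) by blast
  qed
qed

lemma big_case:
  assumes A: "category_of_cubes A" and sc: "shell_complete A" and f: "(n, p, f) \<in> hatbox"
    and p: "2 \<le> p"
  shows "(n, p, f) \<in> A"
proof -
  have si: "cosk1_unit hatbox p n f \<in> cosk1_rep A p n"
    by (rule subsetD[OF repSub[OF A] unit_in[OF f]])
  have all: "\<forall>p\<ge>2. \<forall>n. bij_betw (cosk1_unit A p n) (Hom A n p) (cosk1_rep A p n)"
    using sc unfolding shell_complete_def .
  have bij: "bij_betw (cosk1_unit A p n) (Hom A n p) (cosk1_rep A p n)"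
    using all p by simp
  have "cosk1_unit A p n ` Hom A n p = cosk1_rep A p n"
    by (rule bij_betw_imp_surj_on[OF bij])
  hence "cosk1_unit hatbox p n f \<in> cosk1_unit A p n ` Hom A n p" using si by simp
  then obtain g where g: "g \<in> Hom A n p" "cosk1_unit A p n g = cosk1_unit hatbox p n f" by (rule imageE) simp
  have gA: "(n, p, g) \<in> A" using g(1) unfolding Hom_def by simp
  have "cosk1_unit hatbox p n g = cosk1_unit hatbox p n f" using g(2) unfolding uEq[OF A] .
  hence "g = f" by (rule unit_inj[OF cat_sub[OF A gA] f])
  thus ?thesis using gA by simp
qed

lemma uniq:
  assumes A: "category_of_cubes A" and sc: "shell_complete A"
  shows "A = hatbox"
proof
  show "A \<subseteq> hatbox"
  proof
    fix t assume t: "t \<in> A"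
    obtain n p f where tt: "t = (n, p, f)" by (cases t)
    show "t \<in> hatbox" using cat_sub[OF A, of n p f] t tt by (simp del: mem_hatbox)
  qed
  show "hatbox \<subseteq> A"
  proof
    fix t assume t: "t \<in> hatbox"
    obtain n p f where tt: "t = (n, p, f)" by (cases t)
    have f: "(n, p, f) \<in> hatbox" using t tt by (simp del: mem_hatbox)
    consider "n = 0" | "n = 1" | "2 \<le> n" by linarith
    thus "t \<in> A"
    proof cases
      case 1
      have "f = vtx (f [])" "length (f []) = p" using hom0[of p f] f 1 by simp_all
      thus ?thesis using vtx_A[OF A, of "f []"] tt 1 by simp
    next
      case 2
      then obtain pre suf where "f = edg pre suf" "length pre + Suc (length suf) = p"
        using hom1 f by blast
      thus ?thesis using edg_A[OF A, of pre suf] tt 2 by simp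
    next
      case 3
      thus ?thesis using big_case[OF A sc f p_ge2[OF f 3]] tt by simp
    qed
  qed
qed

theorem theorem7p15:
  shows "category_of_cubes hatbox \<and> shell_complete hatbox \<and>
         (\<forall>A. category_of_cubes A \<and> shell_complete A \<longrightarrow> A = hatbox)"
  using cat_hatbox shell_hat uniq by blast

end
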